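(* On $\mathbb R^2$ with the Euclidean metric, let $\phi(x,y)=\frac14(x^4+y^4)$ and $X=(x^3+x^2y^2)\partial_x+y^3\partial_y$. Then there exist a neighbourhood $U$ of the origin and a constant $\delta>0$ with $d\phi(X)\ge\delta(|X|^2+|d\phi|^2)$ on $U$, but on no neighbourhood $U'$ of the origin does there exist a smooth $(2,0)$ tensor field $g$ with $g(v,v)>0$ for all $v\ne0$ and $d\phi=g(X,\cdot)$ on $U'$. *)

theory Defs
  imports "HOL-Analysis.Analysis"
begin

fun Ck_on :: "nat \<Rightarrow> 'a::euclidean_space set \<Rightarrow> ('a \<Rightarrow> real) \<Rightarrow> bool" where
  "Ck_on 0 S f = continuous_on S f"
| "Ck_on (Suc k) S f = ((\<forall>x\<in>S. f differentiable (at x)) \<and>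
      (\<forall>i\<in>Basis. Ck_on k S (\<lambda>x. frechet_derivative f (at x) i)))"

definition smooth_on :: "'a::euclidean_space set \<Rightarrow> ('a \<Rightarrow> real) \<Rightarrow> bool" where
  "smooth_on S f = (\<forall>k. Ck_on k S f)"

definition phi :: "real \<times> real \<Rightarrow> real" where
  "phi p = (fst p ^ 4 + snd p ^ 4) / 4"

definition dphi :: "real \<times> real \<Rightarrow> real \<times> real \<Rightarrow> real" where
  "dphi p = frechet_derivative phi (at p)"

definition covec_norm2 :: "(real \<times> real \<Rightarrow> real) \<Rightarrow> real" where
  "covec_norm2 w = (w (1,0))^2 + (w (0,1))^2"

definition Xf :: "real \<times> real \<Rightarrow> real \<times> real" where
  "Xf p = (fst p ^ 3 + fst p ^ 2 * snd p ^ 2, snd p ^ 3)"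

text \<open>Bilinear form on R^2 with matrix (g11 g12; g21 g22) (not assumed symmetric).\<close>
definition bilin :: "real \<Rightarrow> real \<Rightarrow> real \<Rightarrow> real \<Rightarrow> real \<times> real \<Rightarrow> real \<times> real \<Rightarrow> real" where
  "bilin g11 g12 g21 g22 u v =
     g11 * fst u * fst v + g12 * fst u * snd v + g21 * snd u * fst v + g22 * snd u * snd v"

end

theory Submission
  imports Defs
begin

lemma dphi_eq: "dphi p = (\<lambda>w. fst p^3 * fst w + snd p^3 * snd w)"
proof -
  have "(phi has_derivative (\<lambda>w. fst p^3 * fst w + snd p^3 * snd w)) (at p)"
    unfolding phi_def [abs_def]
    apply (rule has_derivative_eq_rhs)
     apply (rule derivative_eq_intros | simp)+
    apply (auto simp: fun_eq_iff algebra_simps)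
    done
  then show ?thesis unfolding dphi_def by (metis frechet_derivative_at)
qed

lemma partial_y:
  fixes g :: "real \<times> real \<Rightarrow> real"
  assumes "g differentiable (at (x,t))"
  shows "((\<lambda>s. g (x,s)) has_real_derivative frechet_derivative g (at (x,t)) (0,1)) (at t)"
proof -
  have d: "(g has_derivative frechet_derivative g (at (x,t))) (at (x,t))"
    using assms frechet_derivative_works by blast
  have l: "linear (frechet_derivative g (at (x,t)))" using d has_derivative_linear by blast
  have p: "((\<lambda>s. (x,s)) has_derivative (\<lambda>s. (0,s))) (at t)"
    by (rule derivative_eq_intros | simp)+
  have "((\<lambda>s. g (x,s)) has_derivative (\<lambda>s. frechet_derivative g (at (x,t)) (0,s))) (at t)"
    using has_derivative_compose[OF p d] by (simp add: o_def)
  moreover have "(\<lambda>s. frechet_derivative g (at (x,t)) (0,s)) = (\<lambda>s. frechet_derivative g (at (x,t)) (0,1) * s)"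
  proof
    fix s :: real
    have "(0::real,s) = s *\<^sub>R (0,1)" by simp
    then show "frechet_derivative g (at (x,t)) (0,s) = frechet_derivative g (at (x,t)) (0,1) * s"
      using linear_scale[OF l, of s "(0,1)"] by simp
  qed
  ultimately show ?thesis unfolding has_field_derivative_def by simp
qed

lemma basis01: "((0::real),(1::real)) \<in> Basis" by (simp add: Basis_prod_def)

lemma taylor2:
  fixes f f1 f2 :: "real \<Rightarrow> real"
  assumes t: "t > 0"
    and D: "\<And>s. -t \<le> s \<Longrightarrow> s \<le> t \<Longrightarrow> (f has_real_derivative f1 s) (at s) \<and> (f1 has_real_derivative f2 s) (at s)"
  shows "\<exists>a b. -t < a \<and> a < 0 \<and> 0 < b \<and> b < t \<and> f t + f (-t) - 2 * f 0 = (f2 a + f2 b) / 2 * t^2"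
proof -
  define diff :: "nat \<Rightarrow> real \<Rightarrow> real" where "diff m = (if m = 0 then f else if m = 1 then f1 else f2)" for m
  have DD: "\<forall>m s. m < 2 \<and> -t \<le> s \<and> s \<le> t \<longrightarrow> DERIV (diff m) s :> diff (Suc m) s"
  proof (intro allI impI)
    fix m :: nat and s :: real assume "m < 2 \<and> -t \<le> s \<and> s \<le> t"
    then have "m = 0 \<or> m = 1" "-t \<le> s" "s \<le> t" by auto
    then show "DERIV (diff m) s :> diff (Suc m) s" using D[of s] by (auto simp: diff_def)
  qed
  have d0: "diff 0 = f" by (simp add: diff_def)
  obtain b where b: "0 < b" "b < t" "f t = (\<Sum>m<2. (diff m 0 / fact m) * (t - 0)^m) + (diff 2 b / fact 2) * (t - 0)^2"
    using Taylor_up[of 2 diff f "-t" t 0] DD d0 t by auto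
  obtain a where a: "-t < a" "a < 0" "f (-t) = (\<Sum>m<2. (diff m 0 / fact m) * (-t - 0)^m) + (diff 2 a / fact 2) * (-t - 0)^2"
    using Taylor_down[of 2 diff f "-t" t 0] DD d0 t by auto
  have s2: "{..<2::nat} = {0,1}" by auto
  have "f t = f 0 + f1 0 * t + f2 b / 2 * t^2" using b(3) by (simp add: s2 diff_def)
  moreover have "f (-t) = f 0 - f1 0 * t + f2 a / 2 * t^2" using a(3) by (simp add: s2 diff_def)
  ultimately have "f t + f (-t) - 2 * f 0 = (f2 a + f2 b) / 2 * t^2" by (simp add: algebra_simps add_divide_distrib)
  then show ?thesis using a b by blast
qed

lemma ineq:
  fixes x y :: real
  assumes hx: "\<bar>x\<bar> \<le> 1/2" and hy: "\<bar>y\<bar> \<le> 1/2"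
  shows "1/10 * ((x^3 + x^2*y^2)^2 + (y^3)^2 + ((x^3)^2 + (y^3)^2)) \<le> x^3*(x^3+x^2*y^2) + y^3*y^3"
proof -
  define S where "S = x^6 + y^6"
  have h1: "x^4*y^2 \<le> S"
  proof (cases "x^2 \<le> y^2")
    case True
    have "x^4*y^2 = (x^2)^2*y^2" by simp
    also have "\<dots> \<le> (y^2)^2*y^2" using True by (intro mult_right_mono power_mono[of "x^2" "y^2" 2]) auto
    also have "\<dots> = y^6" by simp
    finally show ?thesis unfolding S_def by (simp add: add_increasing)
  next
    case False
    have "x^4*y^2 \<le> x^4*x^2" using False by (intro mult_left_mono) auto
    also have "x^4*x^2 = x^6" by (simp add: eval_nat_numeral)
    finally have "x^4*y^2 \<le> x^6" .
    moreover have "(0::real) \<le> y^6" by (simp add: zero_le_even_power)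
    ultimately show ?thesis unfolding S_def by linarith
  qed
  have n0: "0 \<le> x^4*y^2" by simp
  have h2: "\<bar>x^5*y^2\<bar> \<le> 1/2 * (x^4*y^2)"
  proof -
    have "\<bar>x^5*y^2\<bar> = \<bar>x\<bar> * (x^4*y^2)" by (simp add: abs_mult power_abs[symmetric] eval_nat_numeral)
    also have "\<dots> \<le> 1/2 * (x^4*y^2)" using hx n0 by (intro mult_right_mono) auto
    finally show ?thesis .
  qed
  have h3: "x^4*y^4 \<le> 1/4 * (x^4*y^2)"
  proof -
    have "\<bar>y\<bar>^2 \<le> (1/2)^2" using hy by (intro power_mono) auto
    then have "y^2 \<le> 1/4" by (simp add: power2_eq_square)
    then have "x^4*y^2*y^2 \<le> x^4*y^2*(1/4)" using n0 by (intro mult_left_mono) auto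
    then show ?thesis by (simp add: eval_nat_numeral algebra_simps)
  qed
  have h4: "(x^3+x^2*y^2)^2 \<le> 2*x^6 + 2*(x^4*y^4)"
  proof -
    have "0 \<le> (x^3 - x^2*y^2)^2" by simp
    then show ?thesis by (simp add: power2_eq_square eval_nat_numeral algebra_simps)
  qed
  have e1: "x^3*(x^3+x^2*y^2) + y^3*y^3 = x^6 + x^5*y^2 + y^6" by (simp add: eval_nat_numeral algebra_simps)
  have e2: "(x^3)^2 = x^6" "(y^3)^2 = y^6" by (simp_all add: power_mult[symmetric])
  have h5: "- \<bar>x^5*y^2\<bar> \<le> x^5*y^2" by linarith
  have h6: "(0::real) \<le> x^6" "(0::real) \<le> y^6" by (simp_all add: zero_le_even_power)
  have L: "\<And>P S R Q A a b::real. P \<le> S \<Longrightarrow> \<bar>R\<bar> \<le> 1/2*P \<Longrightarrow> Q \<le> 1/4*P \<Longrightarrow> A \<le> 2*a + 2*Q \<Longrightarrow> S = a + b \<Longrightarrow> 0 \<le> a \<Longrightarrow> 0 \<le> b \<Longrightarrow> 1/10*(A + b + (a+b)) \<le> a + R + b"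
    by argo
  show ?thesis unfolding e1 e2 using L[OF h1 h2 h3 h4 S_def h6] .
qed

lemma part1: "\<exists>U \<delta>. open U \<and> (0::real \<times> real) \<in> U \<and> \<delta> > 0 \<and>
            (\<forall>p\<in>U. dphi p (Xf p) \<ge> \<delta> * ((norm (Xf p))\<^sup>2 + covec_norm2 (dphi p)))"
proof (intro exI conjI ballI)
  show "open (ball (0::real\<times>real) (1/2))" by simp
  show "(0::real\<times>real) \<in> ball 0 (1/2)" by simp
  show "(0::real) < 1/10" by simp
  fix p :: "real \<times> real" assume p: "p \<in> ball 0 (1/2)"
  obtain x y where xy: "p = (x,y)" by (cases p)
  have n: "norm (x,y) < 1/2" using p xy by simp
  have hx: "\<bar>x\<bar> \<le> 1/2" using norm_fst_le[of x y] n by simp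
  have hy: "\<bar>y\<bar> \<le> 1/2" using norm_snd_le[of y x] n by simp
  have nx: "(norm (Xf p))\<^sup>2 = (x^3 + x^2*y^2)^2 + (y^3)^2"
    by (simp add: xy Xf_def norm_Pair)
  show "1/10 * ((norm (Xf p))\<^sup>2 + covec_norm2 (dphi p)) \<le> dphi p (Xf p)"
    unfolding nx using ineq[OF hx hy] by (simp add: xy dphi_eq covec_norm2_def Xf_def)
qed

lemma part2: "\<not> (\<exists>U' g11 g12 g21 g22. open U' \<and> (0::real \<times> real) \<in> U' \<and>
            smooth_on U' g11 \<and> smooth_on U' g12 \<and> smooth_on U' g21 \<and> smooth_on U' g22 \<and>
            (\<forall>p\<in>U'. \<forall>v. v \<noteq> 0 \<longrightarrow> bilin (g11 p) (g12 p) (g21 p) (g22 p) v v > 0) \<and>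
            (\<forall>p\<in>U'. \<forall>w. dphi p w = bilin (g11 p) (g12 p) (g21 p) (g22 p) (Xf p) w))"
proof
  assume "\<exists>U' g11 g12 g21 g22. open U' \<and> (0::real \<times> real) \<in> U' \<and>
            smooth_on U' g11 \<and> smooth_on U' g12 \<and> smooth_on U' g21 \<and> smooth_on U' g22 \<and>
            (\<forall>p\<in>U'. \<forall>v. v \<noteq> 0 \<longrightarrow> bilin (g11 p) (g12 p) (g21 p) (g22 p) v v > 0) \<and>
            (\<forall>p\<in>U'. \<forall>w. dphi p w = bilin (g11 p) (g12 p) (g21 p) (g22 p) (Xf p) w)"
  then obtain U' g11 g12 g21 g22 where oU: "open U'" and U0: "(0::real\<times>real) \<in> U'"
    and s11: "smooth_on U' g11" and s21: "smooth_on U' g21"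
    and E: "\<forall>p\<in>U'. \<forall>w. dphi p w = bilin (g11 p) (g12 p) (g21 p) (g22 p) (Xf p) w"
    by blast
  define G1 where "G1 = (\<lambda>p. frechet_derivative g11 (at p) (0,1))"
  define G2 where "G2 = (\<lambda>p. frechet_derivative G1 (at p) (0,1))"
  have C2: "Ck_on (Suc (Suc 0)) U' g11" using s11 unfolding smooth_on_def by blast
  have d11: "\<forall>p\<in>U'. g11 differentiable (at p)" using C2 by simp
  have C1: "Ck_on (Suc 0) U' G1" using C2 basis01 unfolding G1_def by simp
  have dG1: "\<forall>p\<in>U'. G1 differentiable (at p)" using C1 by simp
  have cG2: "continuous_on U' G2" using C1 basis01 unfolding G2_def by simp
  have cg21: "continuous_on U' g21" using s21 unfolding smooth_on_def by (metis Ck_on.simps(1))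
  have eq: "fst p^3 = g11 p * (fst p^3 + fst p^2 * snd p^2) + g21 p * snd p^3" if "p \<in> U'" for p
  proof -
    have "dphi p (1,0) = bilin (g11 p) (g12 p) (g21 p) (g22 p) (Xf p) (1,0)" using E that by blast
    then show ?thesis by (simp add: dphi_eq bilin_def Xf_def)
  qed
  obtain e where e: "e > 0" "ball 0 e \<subseteq> U'" using oU U0 open_contains_ball by blast
  have "isCont G2 0" using cG2 oU U0 continuous_on_eq_continuous_at by blast
  then obtain d1 where d1: "d1 > 0" "\<And>p. dist p 0 < d1 \<Longrightarrow> dist (G2 p) (G2 0) < 1"
    unfolding continuous_at_eps_delta by (meson zero_less_one)
  have "isCont g21 0" using cg21 oU U0 continuous_on_eq_continuous_at by blast
  then obtain d2 where d2: "d2 > 0" "\<And>p. dist p 0 < d2 \<Longrightarrow> dist (g21 p) (g21 0) < 1"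
    unfolding continuous_at_eps_delta by (meson zero_less_one)
  define r where "r = min e (min d1 (min d2 1))"
  have r: "r > 0" "r \<le> e" "r \<le> d1" "r \<le> d2" "r \<le> 1" using e d1 d2 by (auto simp: r_def)
  define K where "K = \<bar>G2 0\<bar> + 2"
  define x where "x = min (r/4) (1/(2*K))"
  have K: "K \<ge> 2" by (simp add: K_def)
  have x: "x > 0" "x \<le> r/4" "x \<le> 1/(2*K)" using r K by (auto simp: x_def)
  have x1: "x \<le> 1/4" using x r by linarith
  have xK: "K \<le> 1/(2*x)" using x K by (simp add: field_simps)
  define M where "M = \<bar>g21 0\<bar> + 1"
  have M: "M \<ge> 1" by (simp add: M_def)
  define t where "t = x^2/(2*M)"
  have t0: "t > 0" using x M by (simp add: t_def)
  have tx2: "t * M = x^2/2" using M by (simp add: t_def)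
  have "x^2 \<le> x" using x x1 by (simp add: power2_eq_square mult_le_cancel_left1)
  moreover have "t \<le> x^2/2" unfolding t_def using M x by (simp add: field_simps)
  ultimately have tx: "t \<le> x/2" by linarith
  have inU: "(x,s) \<in> U'" "dist (x,s) 0 < d1" "dist (x,s) 0 < d2" if "\<bar>s\<bar> \<le> t" for s
  proof -
    have "norm (x,s) \<le> norm x + norm s" by (rule norm_Pair_le)
    also have "\<dots> < r" using that tx x by simp
    finally have "norm (x,s) < r" .
    then have "(x,s) \<in> ball 0 e" using r by (simp add: mem_ball dist_0_norm)
    then show "(x,s) \<in> U'" using e by blast
    show "dist (x,s) 0 < d1" "dist (x,s) 0 < d2" using \<open>norm (x,s) < r\<close> r by (auto simp: dist_norm)
  qed
  have bound: "g11 (x,s) - 1 \<le> - (s^2)/(4*x)" if s: "\<bar>s\<bar> \<le> t" for s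
  proof -
    have g: "\<bar>g21 (x,s)\<bar> \<le> M" using d2(2)[OF inU(3)[OF s]] by (simp add: M_def dist_norm)
    have ks: "\<bar>g21 (x,s) * s\<bar> \<le> x^2/2"
    proof -
      have "\<bar>g21 (x,s) * s\<bar> = \<bar>g21 (x,s)\<bar> * \<bar>s\<bar>" by (simp add: abs_mult)
      also have "\<dots> \<le> M * t" using g s by (intro mult_mono) auto
      finally show ?thesis using tx2 by (simp add: mult.commute)
    qed
    have e0: "x^3 = g11 (x,s) * (x^3 + x^2* s^2) + g21 (x,s) * s^3" using eq[OF inU(1)[OF s]] by simp
    define c where "c = g11 (x,s) - 1"
    define B where "B = x + s^2"
    have e1: "x^2 * (c * B) = - (x^2 * s^2) - (g21 (x,s) * s) * s^2"
      using e0 unfolding c_def B_def by (simp add: algebra_simps eval_nat_numeral)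
    have "(g21 (x,s) * s) * s^2 \<ge> - (x^2/2) * s^2"
      using ks by (intro mult_right_mono) auto
    then have m: "x^2 * (c * B) \<le> x^2 * (- (s^2)/2)" using e1 by (simp add: algebra_simps)
    have xp: "x^2 > 0" using x by simp
    have cB: "c * B \<le> - (s^2)/2" using iffD1[OF mult_le_cancel_left_pos[OF xp] m] .
    have s2: "s^2 \<le> x"
    proof -
      have "\<bar>s\<bar>^2 \<le> t^2" using s by (intro power_mono) auto
      then have "s^2 \<le> t^2" by simp
      also have "\<dots> \<le> x^2" using t0 tx x by (intro power_mono) auto
      finally show ?thesis using \<open>x^2 \<le> x\<close> by linarith
    qed
    have B: "B > 0" "B \<le> 2*x" using x s2 zero_le_power2[of s] unfolding B_def by linarith+
    have c0: "c \<le> 0"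
    proof (rule ccontr)
      assume "\<not> c \<le> 0"
      then have "c * B > 0" using B by simp
      moreover have "0 \<le> s^2" by simp
      ultimately show False using cB by linarith
    qed
    have "c * (2*x) \<le> c * B" using c0 B by (intro mult_left_mono_neg) auto
    then have "c * (2*x) \<le> - (s^2)/2" using cB by linarith
    moreover have x2: "0 < 2*x" using x(1) by simp
    ultimately have "c \<le> (- (s^2)/2) / (2*x)" using iffD2[OF pos_le_divide_eq[OF x2]] by blast
    moreover have "(- (s^2)/2) / (2*x) = - (s^2)/(4*x)" by simp
    ultimately show ?thesis unfolding c_def by simp
  qed
  have f0: "g11 (x,0) = 1"
  proof -
    have "x^3 = g11 (x,0) * x^3" using eq[OF inU(1)[of 0]] t0 by simp
    then show ?thesis using x by simp
  qed
  have D: "((\<lambda>s. g11 (x,s)) has_real_derivative G1 (x,s)) (at s) \<and> ((\<lambda>s. G1 (x,s)) has_real_derivative G2 (x,s)) (at s)"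
    if "-t \<le> s" "s \<le> t" for s
  proof -
    have "\<bar>s\<bar> \<le> t" using that by simp
    then have "(x,s) \<in> U'" by (rule inU(1))
    then show ?thesis using partial_y[of g11 x s] partial_y[of G1 x s] d11 dG1
      unfolding G1_def G2_def by auto
  qed
  obtain a b where ab: "-t < a" "a < 0" "0 < b" "b < t"
    "g11 (x,t) + g11 (x,-t) - 2 * g11 (x,0) = (G2 (x,a) + G2 (x,b)) / 2 * t^2"
    using taylor2[of t "\<lambda>s. g11 (x,s)" "\<lambda>s. G1 (x,s)" "\<lambda>s. G2 (x,s)", OF t0 D] by blast
  have ga: "G2 (x,a) \<ge> G2 0 - 1" using d1(2)[OF inU(2)[of a]] ab by (simp add: dist_norm)
  have gb: "G2 (x,b) \<ge> G2 0 - 1" using d1(2)[OF inU(2)[of b]] ab by (simp add: dist_norm)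
  have lhs: "g11 (x,t) + g11 (x,-t) - 2 * g11 (x,0) \<le> - (t^2)/(2*x)"
  proof -
    have b1: "g11 (x,t) - 1 \<le> - (t^2)/(4*x)" using bound[of t] t0 by simp
    have b2: "g11 (x,-t) - 1 \<le> - (t^2)/(4*x)" using bound[of "-t"] t0 by simp
    have "- (t^2)/(4*x) + - (t^2)/(4*x) = - (t^2)/(2*x)" using x by (simp add: field_simps)
    then show ?thesis using b1 b2 f0 by linarith
  qed
  have "(G2 0 - 1) * t^2 \<le> (G2 (x,a) + G2 (x,b)) / 2 * t^2"
    using ga gb by (intro mult_right_mono) auto
  then have "(G2 0 - 1) * t^2 \<le> - (t^2)/(2*x)" using ab(5) lhs by linarith
  moreover have "- (t^2)/(2*x) = (- 1/(2*x)) * t^2" by simp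
  ultimately have m2: "(G2 0 - 1) * t^2 \<le> (- 1/(2*x)) * t^2" by simp
  have tp: "t^2 > 0" using t0 by simp
  have "G2 0 - 1 \<le> - 1/(2*x)" using iffD1[OF mult_le_cancel_right_pos[OF tp] m2] .
  then show False using xK unfolding K_def by linarith
qed

theorem mainTheorem7:
  shows "(\<exists>U \<delta>. open U \<and> (0::real \<times> real) \<in> U \<and> \<delta> > 0 \<and>
            (\<forall>p\<in>U. dphi p (Xf p) \<ge> \<delta> * ((norm (Xf p))\<^sup>2 + covec_norm2 (dphi p))))
       \<and> \<not> (\<exists>U' g11 g12 g21 g22. open U' \<and> (0::real \<times> real) \<in> U' \<and>
            smooth_on U' g11 \<and> smooth_on U' g12 \<and> smooth_on U' g21 \<and> smooth_on U' g22 \<and>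
            (\<forall>p\<in>U'. \<forall>v. v \<noteq> 0 \<longrightarrow> bilin (g11 p) (g12 p) (g21 p) (g22 p) v v > 0) \<and>
            (\<forall>p\<in>U'. \<forall>w. dphi p w = bilin (g11 p) (g12 p) (g21 p) (g22 p) (Xf p) w))"
  using part1 part2 by blast

end
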